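(* Let $\ell<t$ be positive integers and $n\ge 2t+2$. Then $\lambda(C_{2t+1}(T_{n-2t,2}))<\lambda(C_{2\ell+1}(T_{n-2\ell,2}))$.
   Context: $\lambda(G)$ denotes the spectral radius of the adjacency matrix of $G$. $T_{m,2}$ is the complete bipartite graph on $m$ vertices with parts of sizes $\lfloor m/2\rfloor$ and $\lceil m/2\rceil$. For $s\ge1$, $C_{2s+1}(T_{n-2s,2})$ is the $n$-vertex graph obtained by identifying one vertex of a cycle $C_{2s+1}$ with one vertex of $T_{n-2s,2}$ lying in the part of size $\lfloor (n-2s)/2\rfloor$. *)

theory Defs
  imports "Jordan_Normal_Form.Spectral_Radius"
begin

text \<open>Vertices of all graphs are 0,...,n-1. The graph C_{2s+1}(T_{n-2s,2}):
  with m = n - 2s and a = m div 2 (= floor(m/2)), vertices 0..a-1 form the part of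
  size floor(m/2) of the balanced complete bipartite graph T_{m,2}, vertices a..m-1 the
  part of size ceil(m/2). The cycle C_{2s+1} consists of vertex 0 (the identified
  vertex, in the smaller part) and the new vertices m, m+1, ..., m+2s-1.\<close>

definition cyc_vertex :: "nat \<Rightarrow> nat \<Rightarrow> nat" where
  "cyc_vertex m k = (if k = 0 then 0 else m + k - 1)"

definition cycle_turan_adj :: "nat \<Rightarrow> nat \<Rightarrow> nat \<Rightarrow> nat \<Rightarrow> bool" where
  "cycle_turan_adj n s i j =
     (let m = n - 2 * s; a = m div 2 in
        (i < a \<and> a \<le> j \<and> j < m) \<or> (j < a \<and> a \<le> i \<and> i < m) \<or>
        (\<exists>k < 2 * s + 1.
            (i = cyc_vertex m k \<and> j = cyc_vertex m ((k + 1) mod (2 * s + 1))) \<or>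
            (j = cyc_vertex m k \<and> i = cyc_vertex m ((k + 1) mod (2 * s + 1)))))"

definition adj_matrix :: "nat \<Rightarrow> (nat \<Rightarrow> nat \<Rightarrow> bool) \<Rightarrow> complex mat" where
  "adj_matrix n E = mat n n (\<lambda>(i, j). if E i j then 1 else 0)"

definition lambda_cycle_turan :: "nat \<Rightarrow> nat \<Rightarrow> real" where
  "lambda_cycle_turan n s = spectral_radius (adj_matrix n (cycle_turan_adj n s))"

end

theory Submission
  imports Defs
begin


lemma adj_carrier: "adj_matrix n E \<in> carrier_mat n n"
  unfolding adj_matrix_def by auto

lemma adj_mult_vec:
  assumes "v \<in> carrier_vec n" "i < n"
  shows "(adj_matrix n E *\<^sub>v v) $ i = (\<Sum>j\<in>{j. j<n \<and> E i j}. v $ j)"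
proof -
  have "(adj_matrix n E *\<^sub>v v) $ i = (\<Sum>j\<in>{0..<n}. (if E i j then 1 else 0) * v $ j)"
    using assms unfolding adj_matrix_def by (auto simp: scalar_prod_def)
  also have "\<dots> = (\<Sum>j\<in>{0..<n}. if E i j then v $ j else 0)"
    by (rule sum.cong) auto
  also have "\<dots> = (\<Sum>j\<in>{j. j<n \<and> E i j}. v $ j)"
    by (subst sum.If_cases) (auto intro: sum.cong)
  finally show ?thesis .
qed

lemma pow_mat_Suc':
  assumes "A \<in> carrier_mat n n"
  shows "A ^\<^sub>m Suc k = A * A ^\<^sub>m k"
proof (induction k)
  case 0 then show ?case using assms by simp
next
  case (Suc k)
  have "A ^\<^sub>m Suc (Suc k) = (A * A ^\<^sub>m k) * A" using Suc by simp
  also have "\<dots> = A * (A ^\<^sub>m k * A)" by (rule assoc_mult_mat[OF assms pow_carrier_mat[OF assms] assms])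
  finally show ?case by simp
qed

lemma pow_mat_smult:
  assumes "A \<in> carrier_mat n n"
  shows "(c \<cdot>\<^sub>m A) ^\<^sub>m k = (c ^ k :: 'a :: comm_semiring_1) \<cdot>\<^sub>m (A ^\<^sub>m k)"
proof (induction k)
  case 0 then show ?case using assms by (auto intro!: eq_matI)
next
  case (Suc k)
  have "(c \<cdot>\<^sub>m A) ^\<^sub>m Suc k = (c ^ k \<cdot>\<^sub>m (A ^\<^sub>m k)) * (c \<cdot>\<^sub>m A)" using Suc by simp
  also have "\<dots> = (c ^ Suc k) \<cdot>\<^sub>m (A ^\<^sub>m Suc k)"
    using assms by (intro eq_matI) (auto simp: ac_simps)
  finally show ?case .
qed


lemma sr_upper:
  fixes E :: "nat \<Rightarrow> nat \<Rightarrow> bool" and x :: "nat \<Rightarrow> real"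
  assumes n: "n > 0" and xpos: "\<forall>i<n. x i > 0"
    and cond: "\<forall>i<n. (\<Sum>j\<in>{j. j<n \<and> E i j}. x j) < U * x i"
  shows "spectral_radius (adj_matrix n E) < U"
proof -
  let ?A = "adj_matrix n E"
  have A: "?A \<in> carrier_mat n n" by (rule adj_carrier)
  from spectral_radius_mem_max(1)[OF A n] obtain mu where
    mu: "mu \<in> spectrum ?A" and sr: "spectral_radius ?A = norm mu" by auto
  from mu obtain v where ev: "eigenvector ?A v mu"
    unfolding spectrum_def eigenvalue_def by auto
  have vc: "v \<in> carrier_vec n" and vnz: "v \<noteq> 0\<^sub>v n" and Av: "?A *\<^sub>v v = mu \<cdot>\<^sub>v v"
    using ev A unfolding eigenvector_def by auto
  obtain j0 where j0: "j0 < n" "v $ j0 \<noteq> 0"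
    using vnz vc by (metis carrier_vecD eq_vecI index_zero_vec(1) index_zero_vec(2))
  define f where "f i = norm (v $ i) / x i" for i
  define r where "r = Max (f ` {..<n})"
  have fin: "finite (f ` {..<n})" and ne: "f ` {..<n} \<noteq> {}" using n by auto
  obtain i0 where i0: "i0 < n" "f i0 = r"
    using Max_in[OF fin ne] unfolding r_def by auto
  have fle: "f j \<le> r" if "j < n" for j
    unfolding r_def using fin that by auto
  have "f j0 > 0" using j0 xpos unfolding f_def by auto
  hence rpos: "r > 0" using fle[OF j0(1)] by linarith
  have vle: "norm (v $ j) \<le> r * x j" if "j < n" for j
    using fle[OF that] xpos that unfolding f_def by (auto simp: field_simps)
  have vi0: "norm (v $ i0) = r * x i0" using i0 xpos unfolding f_def by (auto simp: field_simps)
  have "norm mu * norm (v $ i0) = norm ((?A *\<^sub>v v) $ i0)"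
    using Av i0 vc by (simp add: norm_mult)
  also have "\<dots> = norm (\<Sum>j\<in>{j. j<n \<and> E i0 j}. v $ j)"
    using adj_mult_vec[OF vc i0(1)] by simp
  also have "\<dots> \<le> (\<Sum>j\<in>{j. j<n \<and> E i0 j}. norm (v $ j))"
    by (rule norm_sum)
  also have "\<dots> \<le> (\<Sum>j\<in>{j. j<n \<and> E i0 j}. r * x j)"
    by (rule sum_mono) (use vle in auto)
  also have "\<dots> = r * (\<Sum>j\<in>{j. j<n \<and> E i0 j}. x j)"
    by (simp add: sum_distrib_left)
  also have "\<dots> < r * (U * x i0)"
    using cond i0 rpos by auto
  finally have "norm mu * (r * x i0) < U * (r * x i0)" unfolding vi0 by (simp add: ac_simps)
  moreover have "r * x i0 > 0" using rpos xpos i0 by auto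
  ultimately show ?thesis using sr by (simp add: mult_less_cancel_right)
qed


fun iterZ :: "nat \<Rightarrow> (nat \<Rightarrow> nat \<Rightarrow> bool) \<Rightarrow> (nat \<Rightarrow> real) \<Rightarrow> nat \<Rightarrow> nat \<Rightarrow> real" where
  "iterZ n E y 0 i = y i"
| "iterZ n E y (Suc k) i = (\<Sum>j\<in>{j. j<n \<and> E i j}. iterZ n E y k j)"

lemma iterZ_pow:
  assumes "i < n"
  shows "(adj_matrix n E ^\<^sub>m k *\<^sub>v vec n (\<lambda>i. complex_of_real (y i))) $ i = complex_of_real (iterZ n E y k i)"
  using assms
proof (induction k arbitrary: i)
  case 0 then show ?case using adj_carrier[of n E] by simp
next
  case (Suc k)
  let ?A = "adj_matrix n E" and ?y = "vec n (\<lambda>i. complex_of_real (y i))"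
  have A: "?A \<in> carrier_mat n n" by (rule adj_carrier)
  have "?A ^\<^sub>m Suc k *\<^sub>v ?y = ?A *\<^sub>v (?A ^\<^sub>m k *\<^sub>v ?y)"
    unfolding pow_mat_Suc'[OF A] by (rule assoc_mult_mat_vec[OF A pow_carrier_mat[OF A]]) simp
  hence "(?A ^\<^sub>m Suc k *\<^sub>v ?y) $ i = (?A *\<^sub>v (?A ^\<^sub>m k *\<^sub>v ?y)) $ i" by simp
  also have "\<dots> = (\<Sum>j\<in>{j. j<n \<and> E i j}. (?A ^\<^sub>m k *\<^sub>v ?y) $ j)"
    by (rule adj_mult_vec[OF _ Suc.prems]) (rule mult_mat_vec_carrier[OF pow_carrier_mat[OF A]], simp)
  also have "\<dots> = (\<Sum>j\<in>{j. j<n \<and> E i j}. complex_of_real (iterZ n E y k j))"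
    by (rule sum.cong) (auto simp: Suc.IH)
  also have "\<dots> = complex_of_real (iterZ n E y (Suc k) i)" by simp
  finally show ?case .
qed

lemma iterZ_lower:
  assumes ynn: "\<forall>i<n. y i \<ge> 0" and L: "L \<ge> 0"
    and cond: "\<forall>i<n. L * y i \<le> (\<Sum>j\<in>{j. j<n \<and> E i j}. y j)"
  shows "i < n \<Longrightarrow> L ^ k * y i \<le> iterZ n E y k i"
proof (induction k arbitrary: i)
  case 0 then show ?case by simp
next
  case (Suc k)
  have "L ^ Suc k * y i = L ^ k * (L * y i)" by simp
  also have "\<dots> \<le> L ^ k * (\<Sum>j\<in>{j. j<n \<and> E i j}. y j)"
    using cond Suc.prems L by (intro mult_left_mono) auto
  also have "\<dots> = (\<Sum>j\<in>{j. j<n \<and> E i j}. L ^ k * y j)" by (simp add: sum_distrib_left)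
  also have "\<dots> \<le> (\<Sum>j\<in>{j. j<n \<and> E i j}. iterZ n E y k j)"
    by (rule sum_mono) (auto intro: Suc.IH)
  finally show ?case by simp
qed

lemma sr_lower:
  fixes E :: "nat \<Rightarrow> nat \<Rightarrow> bool" and y :: "nat \<Rightarrow> real"
  assumes ynn: "\<forall>i<n. y i \<ge> 0" and k0: "k0 < n" "y k0 > 0" and Lpos: "L > 0"
    and cond: "\<forall>i<n. L * y i \<le> (\<Sum>j\<in>{j. j<n \<and> E i j}. y j)"
  shows "L \<le> spectral_radius (adj_matrix n E)"
proof (rule ccontr)
  let ?A = "adj_matrix n E"
  have A: "?A \<in> carrier_mat n n" by (rule adj_carrier)
  have n: "n > 0" using k0 by auto
  define rho where "rho = spectral_radius ?A"
  assume "\<not> L \<le> spectral_radius ?A"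
  hence rhoL: "rho < L" unfolding rho_def by simp
  have rho0: "rho \<ge> 0"
    using spectral_radius_mem_max(1)[OF A n] unfolding rho_def by auto
  define c where "c = (rho + L) / 2"
  have c: "rho < c" "c < L" "c > 0" using rhoL rho0 unfolding c_def by auto
  define B where "B = complex_of_real (1 / c) \<cdot>\<^sub>m ?A"
  have B: "B \<in> carrier_mat n n" unfolding B_def using A by simp
  have "spectral_radius B < 1"
  proof -
    from spectral_radius_mem_max(1)[OF B n] obtain mu where
      mu: "mu \<in> spectrum B" and sr: "spectral_radius B = norm mu" by auto
    from mu obtain v where ev: "eigenvector B v mu"
      unfolding spectrum_def eigenvalue_def by auto
    have vc: "v \<in> carrier_vec n" and vnz: "v \<noteq> 0\<^sub>v n" and Bv: "B *\<^sub>v v = mu \<cdot>\<^sub>v v"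
      using ev B unfolding eigenvector_def by auto
    have "?A *\<^sub>v v = (complex_of_real c * mu) \<cdot>\<^sub>v v"
    proof (rule eq_vecI)
      fix i assume "i < dim_vec ((complex_of_real c * mu) \<cdot>\<^sub>v v)"
      hence i: "i < n" using vc by simp
      have "(B *\<^sub>v v) $ i = complex_of_real (1 / c) * (row ?A i \<bullet> v)"
        using i A vc unfolding B_def by simp
      hence "complex_of_real (1 / c) * (row ?A i \<bullet> v) = mu * v $ i"
        using Bv i vc by simp
      moreover have "complex_of_real c * complex_of_real (1 / c) = 1"
        using c by (simp flip: of_real_mult)
      ultimately have "row ?A i \<bullet> v = complex_of_real c * mu * v $ i"
        by (metis mult.assoc mult_1)
      thus "(?A *\<^sub>v v) $ i = ((complex_of_real c * mu) \<cdot>\<^sub>v v) $ i"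
        using i A vc by simp
    qed (use A vc in simp)
    hence "eigenvector ?A v (complex_of_real c * mu)"
      unfolding eigenvector_def using vc vnz A by simp
    hence "complex_of_real c * mu \<in> spectrum ?A"
      unfolding spectrum_def eigenvalue_def by auto
    hence "norm (complex_of_real c * mu) \<le> rho"
      using spectral_radius_mem_max(2)[OF A n] unfolding rho_def by auto
    hence "c * norm mu \<le> rho" using c by (simp add: norm_mult)
    hence "c * norm mu < c * 1" using c by linarith
    hence "norm mu < 1" using c by (simp only: mult_less_cancel_left_pos)
    thus ?thesis using sr by simp
  qed
  from spectral_radius_jnf_norm_bound_less_1_upper_triangular[OF B this]
  obtain C where C: "\<And>k. norm_bound (B ^\<^sub>m k) C" by auto
  have AB: "?A = complex_of_real c \<cdot>\<^sub>m B"
    unfolding B_def using c A by (intro eq_matI) (auto simp: of_real_def)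
  define S where "S = (\<Sum>j<n. y j)"
  let ?y = "vec n (\<lambda>i. complex_of_real (y i))"
  have bound: "L ^ k * y k0 \<le> c ^ k * (C * S)" for k
  proof -
    have Ak: "?A ^\<^sub>m k = (complex_of_real c) ^ k \<cdot>\<^sub>m (B ^\<^sub>m k)"
      unfolding AB by (rule pow_mat_smult[OF B])
    have low: "L ^ k * y k0 \<le> iterZ n E y k k0"
      using iterZ_lower[OF ynn _ cond k0(1)] Lpos by simp
    have z0: "0 \<le> iterZ n E y k k0"
      by (rule order_trans[OF _ low]) (use Lpos k0 in simp)
    note low
    also have "iterZ n E y k k0 = norm ((?A ^\<^sub>m k *\<^sub>v ?y) $ k0)"
      unfolding iterZ_pow[OF k0(1)] using z0 by simp
    also have "(?A ^\<^sub>m k *\<^sub>v ?y) $ k0 = (\<Sum>j\<in>{0..<n}. (?A ^\<^sub>m k) $$ (k0, j) * complex_of_real (y j))"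
      using k0 A by (simp add: scalar_prod_def)
    also have "norm \<dots> \<le> (\<Sum>j\<in>{0..<n}. norm ((?A ^\<^sub>m k) $$ (k0, j) * complex_of_real (y j)))"
      by (rule norm_sum)
    also have "\<dots> \<le> (\<Sum>j\<in>{0..<n}. c ^ k * C * y j)"
    proof (rule sum_mono)
      fix j assume j: "j \<in> {0..<n}"
      have "norm ((B ^\<^sub>m k) $$ (k0, j)) \<le> C"
        using C[of k] j k0 B unfolding norm_bound_def by auto
      moreover have "(?A ^\<^sub>m k) $$ (k0, j) = (complex_of_real c) ^ k * (B ^\<^sub>m k) $$ (k0, j)"
        unfolding Ak using j k0 B by simp
      ultimately show "norm ((?A ^\<^sub>m k) $$ (k0, j) * complex_of_real (y j)) \<le> c ^ k * C * y j"
        using c ynn j by (simp add: norm_mult norm_power mult_right_mono)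
    qed
    also have "\<dots> = c ^ k * (C * S)" unfolding S_def
      by (simp add: sum_distrib_left lessThan_atLeast0 ac_simps)
    finally show ?thesis .
  qed
  have "1 < L / c" using c by simp
  from real_arch_pow[OF this, of "C * S / y k0"] obtain k where
    k: "C * S / y k0 < (L / c) ^ k" by auto
  have "(L / c) ^ k * y k0 \<le> C * S"
    using bound[of k] c by (simp add: power_divide field_simps)
  hence "(L / c) ^ k \<le> C * S / y k0" using k0 by (simp add: field_simps)
  thus False using k by simp
qed




definition cyc_edge :: "nat \<Rightarrow> nat \<Rightarrow> nat \<Rightarrow> nat \<Rightarrow> bool" where
  "cyc_edge m s i j = ((i = 0 \<and> (j = m \<or> j = m + 2*s - 1)) \<or> (j = 0 \<and> (i = m \<or> i = m + 2*s - 1))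
     \<or> (m \<le> i \<and> j = i + 1 \<and> j < m + 2*s) \<or> (m \<le> j \<and> i = j + 1 \<and> i < m + 2*s))"

lemma cyc_step:
  assumes "1 \<le> s" "k < 2*s+1"
  shows "(i = cyc_vertex m k \<and> j = cyc_vertex m ((k + 1) mod (2 * s + 1)))
     = ((k = 0 \<and> i = 0 \<and> j = m) \<or> (k = 2*s \<and> i = m + 2*s - 1 \<and> j = 0)
        \<or> (0 < k \<and> k < 2*s \<and> i = m + k - 1 \<and> j = m + k))"
proof -
  consider "k = 0" | "k = 2*s" | "0 < k \<and> k < 2*s" using assms by linarith
  then show ?thesis
  proof cases
    case 1 then show ?thesis using assms by (auto simp: cyc_vertex_def)
  next
    case 2 then show ?thesis using assms by (auto simp: cyc_vertex_def)
  next
    case 3 then show ?thesis using assms by (auto simp: cyc_vertex_def)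
  qed
qed

lemma cyc_iff:
  assumes "1 \<le> s" "1 \<le> m"
  shows "(\<exists>k < 2 * s + 1.
            (i = cyc_vertex m k \<and> j = cyc_vertex m ((k + 1) mod (2 * s + 1))) \<or>
            (j = cyc_vertex m k \<and> i = cyc_vertex m ((k + 1) mod (2 * s + 1)))) = cyc_edge m s i j"
proof
  assume "\<exists>k < 2 * s + 1.
            (i = cyc_vertex m k \<and> j = cyc_vertex m ((k + 1) mod (2 * s + 1))) \<or>
            (j = cyc_vertex m k \<and> i = cyc_vertex m ((k + 1) mod (2 * s + 1)))"
  then obtain k where k: "k < 2*s+1" and
    h: "(i = cyc_vertex m k \<and> j = cyc_vertex m ((k + 1) mod (2 * s + 1))) \<or>
            (j = cyc_vertex m k \<and> i = cyc_vertex m ((k + 1) mod (2 * s + 1)))" by blast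
  have A: "cyc_edge m s i j" if "(k = 0 \<and> i = 0 \<and> j = m) \<or> (k = 2*s \<and> i = m + 2*s - 1 \<and> j = 0)
        \<or> (0 < k \<and> k < 2*s \<and> i = m + k - 1 \<and> j = m + k)" for i j
  proof -
    from that consider "k = 0 \<and> i = 0 \<and> j = m" | "k = 2*s \<and> i = m + 2*s - 1 \<and> j = 0"
      | "0 < k \<and> k < 2*s \<and> i = m + k - 1 \<and> j = m + k" by blast
    then show ?thesis
    proof cases
      case 1 then show ?thesis unfolding cyc_edge_def by simp
    next
      case 2 then show ?thesis unfolding cyc_edge_def by simp
    next
      case 3 then show ?thesis unfolding cyc_edge_def by presburger
    qed
  qed
  have sym: "cyc_edge m s i j" if "cyc_edge m s j i" for i j
    using that unfolding cyc_edge_def by blast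
  from h show "cyc_edge m s i j"
  proof
    assume "i = cyc_vertex m k \<and> j = cyc_vertex m ((k + 1) mod (2 * s + 1))"
    from iffD1[OF cyc_step[OF assms(1) k, where i=i and j=j and m=m] this] show ?thesis by (rule A)
  next
    assume "j = cyc_vertex m k \<and> i = cyc_vertex m ((k + 1) mod (2 * s + 1))"
    from iffD1[OF cyc_step[OF assms(1) k, where i=j and j=i and m=m] this] show ?thesis by (rule sym[OF A])
  qed
next
  assume "cyc_edge m s i j"
  then consider "i = 0 \<and> j = m" | "i = 0 \<and> j = m + 2*s - 1" | "j = 0 \<and> i = m" | "j = 0 \<and> i = m + 2*s - 1"
    | "m \<le> i \<and> j = i + 1 \<and> j < m + 2*s" | "m \<le> j \<and> i = j + 1 \<and> i < m + 2*s"
    unfolding cyc_edge_def by blast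
  then show "\<exists>k < 2 * s + 1.
            (i = cyc_vertex m k \<and> j = cyc_vertex m ((k + 1) mod (2 * s + 1))) \<or>
            (j = cyc_vertex m k \<and> i = cyc_vertex m ((k + 1) mod (2 * s + 1)))"
  proof cases
    case 1
    have k: "0 < 2*s+1" by simp
    have "i = cyc_vertex m 0 \<and> j = cyc_vertex m ((0 + 1) mod (2 * s + 1))"
      using cyc_step[OF assms(1) k, where i=i and j=j and m=m] 1 by blast
    then show ?thesis using k by (intro exI[where x=0]) blast
  next
    case 2
    have k: "2*s < 2*s+1" by simp
    have "j = cyc_vertex m (2*s) \<and> i = cyc_vertex m ((2*s + 1) mod (2 * s + 1))"
      using cyc_step[OF assms(1) k, where i=j and j=i and m=m] 2 by blast
    then show ?thesis using k by (intro exI[where x="2*s"]) blast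
  next
    case 3
    have k: "0 < 2*s+1" by simp
    have "j = cyc_vertex m 0 \<and> i = cyc_vertex m ((0 + 1) mod (2 * s + 1))"
      using cyc_step[OF assms(1) k, where i=j and j=i and m=m] 3 by blast
    then show ?thesis using k by (intro exI[where x=0]) blast
  next
    case 4
    have k: "2*s < 2*s+1" by simp
    have "i = cyc_vertex m (2*s) \<and> j = cyc_vertex m ((2*s + 1) mod (2 * s + 1))"
      using cyc_step[OF assms(1) k, where i=i and j=j and m=m] 4 by blast
    then show ?thesis using k by (intro exI[where x="2*s"]) blast
  next
    case 5
    define k where "k = i - m + 1"
    have k: "k < 2*s+1" "0 < k" "k < 2*s" "i = m + k - 1" "j = m + k"
      using 5 unfolding k_def by auto
    have "i = cyc_vertex m k \<and> j = cyc_vertex m ((k + 1) mod (2 * s + 1))"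
      using cyc_step[OF assms(1) k(1), where i=i and j=j and m=m] k by blast
    then show ?thesis using k by (intro exI[where x=k]) blast
  next
    case 6
    define k where "k = j - m + 1"
    have k: "k < 2*s+1" "0 < k" "k < 2*s" "j = m + k - 1" "i = m + k"
      using 6 unfolding k_def by auto
    have "j = cyc_vertex m k \<and> i = cyc_vertex m ((k + 1) mod (2 * s + 1))"
      using cyc_step[OF assms(1) k(1), where i=j and j=i and m=m] k by blast
    then show ?thesis using k by (intro exI[where x=k]) blast
  qed
qed

lemma adj_iff:
  assumes "1 \<le> s" "2 * s + 1 \<le> n"
  shows "cycle_turan_adj n s i j =
    ((i < (n - 2*s) div 2 \<and> (n - 2*s) div 2 \<le> j \<and> j < n - 2*s) \<or>
     (j < (n - 2*s) div 2 \<and> (n - 2*s) div 2 \<le> i \<and> i < n - 2*s) \<or> cyc_edge (n - 2*s) s i j)"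
proof -
  have m1: "1 \<le> n - 2*s" using assms by simp
  show ?thesis unfolding cycle_turan_adj_def Let_def cyc_iff[OF assms(1) m1] by (rule refl)
qed




lemma upper_graph:
  fixes u0 u v w U :: real
  assumes s: "1 \<le> s" and nn: "2 * s + 2 \<le> n" and m: "m = n - 2*s" and a: "a = m div 2"
    and pos: "u0 > 0" "u > 0" "v > 0" "w > 0" "w \<le> u0"
    and c0: "real (m - a) * v + 2 * w < U * u0"
    and c1: "a \<ge> 2 \<longrightarrow> real (m - a) * v < U * u"
    and c2: "u0 + real (a - 1) * u < U * v"
    and c3: "u0 + w < U * w"
  shows "lambda_cycle_turan n s < U"
proof -
  define x where "x i = (if i = 0 then u0 else if i < a then u else if i < m then v else w)" for i
  let ?E = "cycle_turan_adj n s"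
  have E: "?E i j = ((i < a \<and> a \<le> j \<and> j < m) \<or> (j < a \<and> a \<le> i \<and> i < m) \<or> cyc_edge m s i j)" for i j
    using adj_iff[OF s, of n i j] nn unfolding m a by simp
  have m2: "m \<ge> 2" and a1: "a \<ge> 1" and am: "a < m" and nm: "n = m + 2*s" using nn s unfolding m a by auto
  have xnn: "x j \<ge> 0" for j using pos unfolding x_def by auto
  have sup: "(\<Sum>j\<in>{j. j<n \<and> ?E i j}. x j) \<le> sum x S" if "finite S" "{j. j<n \<and> ?E i j} \<subseteq> S" for i S
    by (rule sum_mono2[OF that]) (use xnn in auto)
  have sumv: "sum x {a..<m} = real (m - a) * v"
  proof -
    have "sum x {a..<m} = sum (\<lambda>_. v) {a..<m}" by (rule sum.cong) (use a1 in \<open>auto simp: x_def\<close>)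
    thus ?thesis by simp
  qed
  have sumu: "sum x {0..<a} = u0 + real (a - 1) * u"
  proof -
    have "{0..<a} = insert 0 {1..<a}" using a1 by auto
    hence "sum x {0..<a} = x 0 + sum x {1..<a}" by simp
    also have "sum x {1..<a} = sum (\<lambda>_. u) {1..<a}" by (rule sum.cong) (auto simp: x_def)
    finally show ?thesis by (simp add: x_def)
  qed
  have "\<forall>i<n. (\<Sum>j\<in>{j. j<n \<and> ?E i j}. x j) < U * x i"
  proof (intro allI impI)
    fix i assume i: "i < n"
    consider "i = 0" | "0 < i \<and> i < a" | "a \<le> i \<and> i < m" | "i = m" | "i = n - 1" | "m < i \<and> i < n - 1"
      using i nm by linarith
    then show "(\<Sum>j\<in>{j. j<n \<and> ?E i j}. x j) < U * x i"
    proof cases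
      case 1
      have "{j. j<n \<and> ?E i j} \<subseteq> {a..<m} \<union> {m, n-1}"
        using 1 a1 m2 nm unfolding E cyc_edge_def by auto
      hence "(\<Sum>j\<in>{j. j<n \<and> ?E i j}. x j) \<le> sum x ({a..<m} \<union> {m, n-1})" by (intro sup) auto
      also have "\<dots> = sum x {a..<m} + sum x {m, n-1}" by (rule sum.union_disjoint) (use nm s in auto)
      also have "sum x {m, n-1} = 2 * w" using nm s m2 am by (auto simp: x_def)
      finally show ?thesis using c0 sumv 1 by (simp add: x_def)
    next
      case 2
      have "{j. j<n \<and> ?E i j} \<subseteq> {a..<m}"
        using 2 am nm unfolding E cyc_edge_def by auto
      hence "(\<Sum>j\<in>{j. j<n \<and> ?E i j}. x j) \<le> sum x {a..<m}" by (intro sup) auto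
      then show ?thesis using c1 sumv 2 by (simp add: x_def)
    next
      case 3
      have "{j. j<n \<and> ?E i j} \<subseteq> {0..<a}"
        using 3 a1 unfolding E cyc_edge_def by auto
      hence "(\<Sum>j\<in>{j. j<n \<and> ?E i j}. x j) \<le> sum x {0..<a}" by (intro sup) auto
      then show ?thesis using c2 sumu 3 a1 by (simp add: x_def)
    next
      case 4
      have "{j. j<n \<and> ?E i j} \<subseteq> {0, m+1}"
        using 4 a1 nm s m2 am unfolding E cyc_edge_def by auto
      hence "(\<Sum>j\<in>{j. j<n \<and> ?E i j}. x j) \<le> sum x {0, m+1}" by (intro sup) auto
      also have "sum x {0, m+1} = u0 + w" using am by (simp add: x_def)
      finally show ?thesis using c3 4 am m2 by (simp add: x_def)
    next
      case 5
      have "{j. j<n \<and> ?E i j} \<subseteq> {0, n-2}"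
        using 5 a1 nm s m2 am unfolding E cyc_edge_def by auto
      hence le: "(\<Sum>j\<in>{j. j<n \<and> ?E i j}. x j) \<le> sum x {0, n-2}" by (intro sup) auto
      have "n - 2 \<ge> m" "n - 2 \<noteq> 0" using nm s m2 by auto
      hence "sum x {0, n-2} = u0 + w" using am by (simp add: x_def)
      with le show ?thesis using c3 5 am m2 nm s by (simp add: x_def)
    next
      case 6
      have "{j. j<n \<and> ?E i j} \<subseteq> {i-1, i+1}"
        using 6 a1 nm s m2 am unfolding E cyc_edge_def by auto
      hence "(\<Sum>j\<in>{j. j<n \<and> ?E i j}. x j) \<le> sum x {i-1, i+1}" by (intro sup) auto
      also have "sum x {i-1, i+1} = 2 * w"
      proof -
        have "i - 1 \<ge> m" "i - 1 \<noteq> 0" "i - 1 \<noteq> i + 1" "\<not> i + 1 < m" using 6 m2 by auto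
        thus ?thesis using am by (simp add: x_def)
      qed
      finally show ?thesis using c3 6 am m2 pos by (simp add: x_def)
    qed
  qed
  moreover have "\<forall>i<n. x i > 0" using pos unfolding x_def by auto
  moreover have "n > 0" using nn by simp
  ultimately show ?thesis unfolding lambda_cycle_turan_def
    using sr_upper by blast
qed




lemma lower_graph:
  fixes p0 p q r L :: real
  assumes s: "1 \<le> s" and m: "m = n - 2*s" and a: "a = m div 2"
    and P: "1 \<le> P" "P \<le> a" and Q: "a + Q \<le> m"
    and pos: "p0 > 0" "p \<ge> 0" "q \<ge> 0" "r \<ge> 0" "L > 0"
    and l0: "L * p0 \<le> real Q * q + 2 * r"
    and l1: "P \<ge> 2 \<longrightarrow> L * p \<le> real Q * q"
    and l2: "L * q \<le> p0 + real (P - 1) * p"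
    and l3: "L * r \<le> p0"
  shows "L \<le> lambda_cycle_turan n s"
proof -
  define y where "y i = (if i = 0 then p0 else if i < P then p else if a \<le> i \<and> i < a + Q then q
     else if i = m \<or> i = n - 1 then r else 0)" for i
  let ?E = "cycle_turan_adj n s"
  have m2: "m \<ge> 2" and nm: "n = m + 2*s" using P s unfolding m a by auto
  have E: "?E i j = ((i < a \<and> a \<le> j \<and> j < m) \<or> (j < a \<and> a \<le> i \<and> i < m) \<or> cyc_edge m s i j)" for i j
  proof -
    have "2 * s + 1 \<le> n" using nm m2 by simp
    from adj_iff[OF s this, of i j] show ?thesis unfolding m a .
  qed
  have ynn: "y j \<ge> 0" for j using pos unfolding y_def by auto
  have sub: "sum y S \<le> (\<Sum>j\<in>{j. j<n \<and> ?E i j}. y j)" if "S \<subseteq> {j. j<n \<and> ?E i j}" for i S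
    by (rule sum_mono2[OF _ that]) (use ynn in auto)
  have sumq: "sum y {a..<a+Q} = real Q * q"
  proof -
    have "sum y {a..<a+Q} = sum (\<lambda>_. q) {a..<a+Q}" by (rule sum.cong) (use P in \<open>auto simp: y_def\<close>)
    thus ?thesis by simp
  qed
  have sump: "sum y {0..<P} = p0 + real (P - 1) * p"
  proof -
    have "{0..<P} = insert 0 {1..<P}" using P by auto
    hence "sum y {0..<P} = y 0 + sum y {1..<P}" by simp
    also have "sum y {1..<P} = sum (\<lambda>_. p) {1..<P}" by (rule sum.cong) (auto simp: y_def)
    finally show ?thesis by (simp add: y_def)
  qed
  have cond: "\<forall>i<n. L * y i \<le> (\<Sum>j\<in>{j. j<n \<and> ?E i j}. y j)"
  proof (intro allI impI)
    fix i assume i: "i < n"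
    consider "i = 0" | "0 < i \<and> i < P" | "a \<le> i \<and> i < a + Q" | "i = m \<or> i = n - 1"
      | "\<not> (i = 0 \<or> i < P \<or> (a \<le> i \<and> i < a + Q) \<or> i = m \<or> i = n - 1)"
      by blast
    then show "L * y i \<le> (\<Sum>j\<in>{j. j<n \<and> ?E i j}. y j)"
    proof cases
      case 1
      have "{a..<a+Q} \<union> {m, n-1} \<subseteq> {j. j<n \<and> ?E i j}"
        using 1 P Q nm s m2 unfolding E cyc_edge_def by auto
      hence "sum y ({a..<a+Q} \<union> {m, n-1}) \<le> (\<Sum>j\<in>{j. j<n \<and> ?E i j}. y j)" by (rule sub)
      moreover have "sum y ({a..<a+Q} \<union> {m, n-1}) = sum y {a..<a+Q} + sum y {m, n-1}"
        by (rule sum.union_disjoint) (use nm s Q in auto)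
      moreover have "sum y {m, n-1} = 2 * r"
      proof -
        have "m \<noteq> n - 1" "m \<noteq> 0" "n - 1 \<noteq> 0" "\<not> m < P" "\<not> n - 1 < P" "\<not> m < a + Q" "\<not> n - 1 < a + Q"
          using nm s m2 P Q by auto
        thus ?thesis by (simp add: y_def)
      qed
      ultimately show ?thesis using l0 sumq 1 by (simp add: y_def)
    next
      case 2
      have "{a..<a+Q} \<subseteq> {j. j<n \<and> ?E i j}"
        using 2 P Q nm unfolding E by auto
      hence "sum y {a..<a+Q} \<le> (\<Sum>j\<in>{j. j<n \<and> ?E i j}. y j)" by (rule sub)
      then show ?thesis using l1 sumq 2 by (simp add: y_def)
    next
      case 3
      have "{0..<P} \<subseteq> {j. j<n \<and> ?E i j}"
        using 3 P Q nm unfolding E by auto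
      hence "sum y {0..<P} \<le> (\<Sum>j\<in>{j. j<n \<and> ?E i j}. y j)" by (rule sub)
      moreover have "y i = q" using 3 P unfolding y_def by auto
      ultimately show ?thesis using l2 sump by simp
    next
      case 4
      have "{0} \<subseteq> {j. j<n \<and> ?E i j}"
        using 4 nm s m2 unfolding E cyc_edge_def by auto
      hence "sum y {0} \<le> (\<Sum>j\<in>{j. j<n \<and> ?E i j}. y j)" by (rule sub)
      moreover have "y i = r"
      proof -
        have "i \<noteq> 0" "\<not> i < P" "\<not> (a \<le> i \<and> i < a + Q)" using 4 nm s m2 P Q by auto
        thus ?thesis using 4 unfolding y_def by auto
      qed
      ultimately show ?thesis using l3 by (simp add: y_def)
    next
      case 5
      hence "y i = 0" unfolding y_def by auto
      moreover have "0 \<le> (\<Sum>j\<in>{j. j<n \<and> ?E i j}. y j)" by (rule sum_nonneg) (use ynn in auto)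
      ultimately show ?thesis by simp
    qed
  qed
  have yn: "\<forall>i<n. y i \<ge> 0" using ynn by auto
  have n0: "0 < n" and y0: "y 0 > 0" using nm pos m2 unfolding y_def by auto
  show ?thesis unfolding lambda_cycle_turan_def
    by (rule sr_lower[OF yn n0 y0 pos(5) cond])
qed




theorem lemma3p5:
  fixes l t n :: nat
  assumes "0 < l" and "l < t" and "n \<ge> 2 * t + 2"
  shows "lambda_cycle_turan n t < lambda_cycle_turan n l"
proof -
  define m where "m = n - 2*t"
  define a where "a = m div 2"
  define m' where "m' = n - 2*l"
  define a' where "a' = m' div 2"
  have t1: "1 \<le> t" and l1: "1 \<le> l" using assms by auto
  have m2: "m \<ge> 2" using assms unfolding m_def by auto
  have mm': "m' \<ge> m + 2" using assms unfolding m_def m'_def by auto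
  have aa': "a + 1 \<le> a'" using mm' unfolding a_def a'_def by auto
  have ba': "m - a + 1 \<le> m' - a'" using mm' unfolding a_def a'_def by auto
  have a'le: "a' \<le> m'" unfolding a'_def by simp
  have ab: "a \<le> m - a" "a \<le> m" unfolding a_def by auto
  have nt: "2 * t + 2 \<le> n" using assms by simp
  have bb: "m - a = a \<or> m - a = a + 1" unfolding a_def by auto
  consider "a \<ge> 2" | "m = 3" | "m = 2" using m2 unfolding a_def by linarith
  then show ?thesis
  proof cases
    case 1
    define A where "A = real a"
    have A2: "A \<ge> 2" using 1 unfolding A_def by simp
    have bv: "real (m - a) \<le> A + 1" using bb unfolding A_def by auto
    define v :: real where "v = (4*A+3)/(4*A+4)"
    define w :: real where "w = 3/(2*A) + 1/16"
    have v: "(A + 1) * v = A + 3/4" "v > 0" "v < 1" unfolding v_def using A2 by (auto simp: field_simps)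
    have w: "A * w = 3/2 + A/16" "w > 0" "w \<le> 3/2" "2 * w = 3/A + 1/8"
      unfolding w_def using A2 by (auto simp: field_simps)
    have bvle: "real (m - a) * v \<le> A + 3/4"
      using mult_right_mono[OF bv, of v] v by simp
    have key: "A + 3/4 + (3/A + 1/8) < (A + 1) * (3/2)"
    proof -
      have "3/A \<le> 3/2" using A2 by (simp add: field_simps)
      thus ?thesis using A2 by simp
    qed
    have up: "lambda_cycle_turan n t < A + 1"
    proof (rule upper_graph[OF t1 nt m_def a_def, of "3/2" 1 v w])
      show "(0::real) < 3/2" "(0::real) < 1" "0 < v" "0 < w" "w \<le> 3/2" using v w A2 by auto
      show "real (m - a) * v + 2 * w < (A + 1) * (3 / 2)" using bvle key w by linarith
      show "2 \<le> a \<longrightarrow> real (m - a) * v < (A + 1) * 1" using bvle by simp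
      show "3 / 2 + real (a - 1) * 1 < (A + 1) * v" using v 1 unfolding A_def by (simp add: of_nat_diff)
      have "(A + 1) * w = A * w + w" by (simp add: algebra_simps)
      thus "3 / 2 + w < (A + 1) * w" using w A2 by linarith
    qed
    have low: "A + 1 \<le> lambda_cycle_turan n l"
      by (rule lower_graph[OF l1 m'_def a'_def, of "a+1" "a+1" 1 1 1 0])
        (use aa' ba' a'le ab A2 in \<open>auto simp: A_def\<close>)
    show ?thesis using up low by simp
  next
    case 2
    have a1: "a = 1" using 2 unfolding a_def by simp
    have up: "lambda_cycle_turan n t < 12/5"
      by (rule upper_graph[OF t1 nt m_def a_def, of 1 1 "43/100" "73/100"]) (use 2 a1 in auto)
    have low: "12/5 \<le> lambda_cycle_turan n l"
      by (rule lower_graph[OF l1 m'_def a'_def, of 2 3 6 6 5 0])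
        (use aa' ba' a'le ab 2 a1 in auto)
    show ?thesis using up low by simp
  next
    case 3
    have a1: "a = 1" using 3 unfolding a_def by simp
    have up: "lambda_cycle_turan n t < 11/5"
      by (rule upper_graph[OF t1 nt m_def a_def, of 1 1 "46/100" "84/100"]) (use 3 a1 in auto)
    have low: "11/5 \<le> lambda_cycle_turan n l"
      by (rule lower_graph[OF l1 m'_def a'_def, of 2 2 1 "1/2" "13/20" "9/20"])
        (use aa' ba' a'le ab 3 a1 in auto)
    show ?thesis using up low by simp
  qed
qed


end
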